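(* Let $\mathfrak A=\langle A,f,g\rangle$ be a betweenness algebra. Then for all ultrafilters $\mathcal U,\mathcal U_1,\mathcal U_2,\mathcal U_3$ of $A$: (i) $Q_f(\mathcal U,\mathcal U,\mathcal U)$; (ii) $Q_f(\mathcal U_1,\mathcal U_2,\mathcal U_3)\Rightarrow Q_f(\mathcal U_3,\mathcal U_2,\mathcal U_1)$; (iii) $S_g(\mathcal U_1,\mathcal U_2,\mathcal U_3)\Rightarrow S_g(\mathcal U_3,\mathcal U_2,\mathcal U_1)$; (iv) $Q_f(\mathcal U_1,\mathcal U_2,\mathcal U_3)\Rightarrow Q_f(\mathcal U_1,\mathcal U_1,\mathcal U_2)$; (v) $Q_f(\mathcal U_1,\mathcal U_2,\mathcal U_3)\wedge S_g(\mathcal U_1,\mathcal U_3,\mathcal U_2)\Rightarrow \mathcal U_2=\mathcal U_3$. If $\mathfrak A$ is a strong betweenness algebra, then additionally $Q_f(\mathcal U_1,\mathcal U_1,\mathcal U_2)$ for all ultrafilters $\mathcal U_1,\mathcal U_2$. If $\mathfrak A$ is a weak betweenness algebra, then $S_g(\mathcal U_1,\mathcal U_2,\mathcal U_1)\Rightarrow\mathcal U_1=\mathcal U_2$ for all ultrafilters $\mathcal U_1,\mathcal U_2$.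
   Context: A PS-algebra is $\langle A,f,g\rangle$, $A$ a Boolean algebra with at least two elements (operations $+,\cdot,-,0,1$), $f,g\colon A^2\to A$, $f$ normal ($f(x,y)=0$ if $x=0$ or $y=0$) and additive in each argument, $g$ co-normal ($g(x,y)=1$ if $x=0$ or $y=0$) and co-additive in each argument ($g(x+x',y)=g(x,y)g(x',y)$, $g(x,y+y')=g(x,y)g(x,y')$). Axioms (for all $x,y,z,a,b$): (ABT0) $x\leq f(x,x)$; (ABT1$_f$) $f(x,y)\leq f(y,x)$; (ABT1$_g$) $g(x,y)\leq g(y,x)$; (ABT2) $y\cdot f(x,z)\leq f(x\cdot f(x,y),z)$; (ABT3) $f(x,g(x,-y)\cdot y)\leq y$; (wMIA) $x\neq0,y\neq0\Rightarrow g(x,y)\leq f(x,y)$; (ABTW) $a\neq0\Rightarrow g(a,a)\leq a$; (ABT2$^{\mathrm s}$) $b\neq0\Rightarrow a\leq f(a,b)$. Betweenness algebra: (ABT0),(ABT1$_f$),(ABT1$_g$),(ABT2),(ABT3),(wMIA). Weak betweenness algebra: (ABT0),(ABT1$_f$),(ABT1$_g$),(ABT2),(ABTW). Strong betweenness algebra: (ABT1$_f$),(ABT1$_g$),(ABT3),(wMIA),(ABT2$^{\mathrm s}$). On the ultrafilters of $A$: $Q_f(\mathcal U_1,\mathcal U_2,\mathcal U_3)\iff f[\mathcal U_1\times\mathcal U_3]\subseteq\mathcal U_2$ and $S_g(\mathcal U_1,\mathcal U_2,\mathcal U_3)\iff g[\mathcal U_1\times\mathcal U_3]\cap\mathcal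 U_2\neq\emptyset$. *)

theory Defs
  imports Main
begin

text \<open>Boolean algebras are the type class boolean_algebra (operations sup = +, inf = \<cdot>,
 uminus = -, bot = 0, top = 1).  f, g are binary operations on the carrier type.\<close>

definition PS_algebra :: "('a::boolean_algebra \<Rightarrow> 'a \<Rightarrow> 'a) \<Rightarrow> ('a \<Rightarrow> 'a \<Rightarrow> 'a) \<Rightarrow> bool" where
  "PS_algebra f g \<longleftrightarrow>
     (bot::'a) \<noteq> top \<and>
     (\<forall>x. f x bot = bot \<and> f bot x = bot) \<and>
     (\<forall>x x' y. f (sup x x') y = sup (f x y) (f x' y)) \<and>
     (\<forall>x y y'. f x (sup y y') = sup (f x y) (f x y')) \<and>
     (\<forall>x. g x bot = top \<and> g bot x = top) \<and>
     (\<forall>x x' y. g (sup x x') y = inf (g x y) (g x' y)) \<and>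
     (\<forall>x y y'. g x (sup y y') = inf (g x y) (g x y'))"

definition ABT0 :: "('a::boolean_algebra \<Rightarrow> 'a \<Rightarrow> 'a) \<Rightarrow> bool" where
  "ABT0 f \<longleftrightarrow> (\<forall>x. x \<le> f x x)"
definition ABT1 :: "('a::boolean_algebra \<Rightarrow> 'a \<Rightarrow> 'a) \<Rightarrow> bool" where
  "ABT1 h \<longleftrightarrow> (\<forall>x y. h x y \<le> h y x)"
definition ABT2 :: "('a::boolean_algebra \<Rightarrow> 'a \<Rightarrow> 'a) \<Rightarrow> bool" where
  "ABT2 f \<longleftrightarrow> (\<forall>x y z. inf y (f x z) \<le> f (inf x (f x y)) z)"
definition ABT3 :: "('a::boolean_algebra \<Rightarrow> 'a \<Rightarrow> 'a) \<Rightarrow> ('a \<Rightarrow> 'a \<Rightarrow> 'a) \<Rightarrow> bool" where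
  "ABT3 f g \<longleftrightarrow> (\<forall>x y. f x (inf (g x (- y)) y) \<le> y)"
definition wMIA :: "('a::boolean_algebra \<Rightarrow> 'a \<Rightarrow> 'a) \<Rightarrow> ('a \<Rightarrow> 'a \<Rightarrow> 'a) \<Rightarrow> bool" where
  "wMIA f g \<longleftrightarrow> (\<forall>x y. x \<noteq> bot \<and> y \<noteq> bot \<longrightarrow> g x y \<le> f x y)"
definition ABTW :: "('a::boolean_algebra \<Rightarrow> 'a \<Rightarrow> 'a) \<Rightarrow> bool" where
  "ABTW g \<longleftrightarrow> (\<forall>a. a \<noteq> bot \<longrightarrow> g a a \<le> a)"
definition ABT2s :: "('a::boolean_algebra \<Rightarrow> 'a \<Rightarrow> 'a) \<Rightarrow> bool" where
  "ABT2s f \<longleftrightarrow> (\<forall>a b. b \<noteq> bot \<longrightarrow> a \<le> f a b)"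

definition betweenness_algebra :: "('a::boolean_algebra \<Rightarrow> 'a \<Rightarrow> 'a) \<Rightarrow> ('a \<Rightarrow> 'a \<Rightarrow> 'a) \<Rightarrow> bool" where
  "betweenness_algebra f g \<longleftrightarrow> PS_algebra f g \<and> ABT0 f \<and> ABT1 f \<and> ABT1 g \<and> ABT2 f
     \<and> ABT3 f g \<and> wMIA f g"
definition weak_betweenness_algebra :: "('a::boolean_algebra \<Rightarrow> 'a \<Rightarrow> 'a) \<Rightarrow> ('a \<Rightarrow> 'a \<Rightarrow> 'a) \<Rightarrow> bool" where
  "weak_betweenness_algebra f g \<longleftrightarrow> PS_algebra f g \<and> ABT0 f \<and> ABT1 f \<and> ABT1 g \<and> ABT2 f
     \<and> ABTW g"
definition strong_betweenness_algebra :: "('a::boolean_algebra \<Rightarrow> 'a \<Rightarrow> 'a) \<Rightarrow> ('a \<Rightarrow> 'a \<Rightarrow> 'a) \<Rightarrow> bool" where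
  "strong_betweenness_algebra f g \<longleftrightarrow> PS_algebra f g \<and> ABT1 f \<and> ABT1 g \<and> ABT3 f g
     \<and> wMIA f g \<and> ABT2s f"

definition ultrafilter :: "'a::boolean_algebra set \<Rightarrow> bool" where
  "ultrafilter U \<longleftrightarrow> top \<in> U \<and> bot \<notin> U \<and>
     (\<forall>x y. x \<in> U \<and> x \<le> y \<longrightarrow> y \<in> U) \<and>
     (\<forall>x y. x \<in> U \<and> y \<in> U \<longrightarrow> inf x y \<in> U) \<and>
     (\<forall>x. x \<in> U \<or> - x \<in> U)"

definition Q_f :: "('a::boolean_algebra \<Rightarrow> 'a \<Rightarrow> 'a) \<Rightarrow> 'a set \<Rightarrow> 'a set \<Rightarrow> 'a set \<Rightarrow> bool" where
  "Q_f f U1 U2 U3 \<longleftrightarrow> (\<lambda>(x, y). f x y) ` (U1 \<times> U3) \<subseteq> U2"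
definition S_g :: "('a::boolean_algebra \<Rightarrow> 'a \<Rightarrow> 'a) \<Rightarrow> 'a set \<Rightarrow> 'a set \<Rightarrow> 'a set \<Rightarrow> bool" where
  "S_g g U1 U2 U3 \<longleftrightarrow> (\<lambda>(x, y). g x y) ` (U1 \<times> U3) \<inter> U2 \<noteq> {}"

end

theory Submission
  imports Defs
begin

lemma uf_up: "ultrafilter U \<Longrightarrow> x \<in> U \<Longrightarrow> x \<le> y \<Longrightarrow> y \<in> U"
  unfolding ultrafilter_def by blast
lemma uf_inf: "ultrafilter U \<Longrightarrow> x \<in> U \<Longrightarrow> y \<in> U \<Longrightarrow> inf x y \<in> U"
  unfolding ultrafilter_def by blast
lemma uf_bot: "ultrafilter U \<Longrightarrow> bot \<notin> U"
  unfolding ultrafilter_def by blast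
lemma uf_top: "ultrafilter U \<Longrightarrow> top \<in> U"
  unfolding ultrafilter_def by blast
lemma uf_compl: "ultrafilter U \<Longrightarrow> x \<notin> U \<Longrightarrow> - x \<in> U"
  unfolding ultrafilter_def by blast
lemma uf_not_both: "ultrafilter U \<Longrightarrow> x \<in> U \<Longrightarrow> - x \<in> U \<Longrightarrow> False"
  using uf_inf[of U x "-x"] uf_bot[of U] by simp
lemma uf_nonbot: "ultrafilter U \<Longrightarrow> x \<in> U \<Longrightarrow> x \<noteq> bot"
  using uf_bot by blast
lemma uf_sub_eq: "ultrafilter U \<Longrightarrow> ultrafilter V \<Longrightarrow> U \<subseteq> V \<Longrightarrow> U = V"
  by (meson subsetD subsetI subset_antisym uf_compl uf_not_both)

lemma f_mono1: "PS_algebra f g \<Longrightarrow> x \<le> x' \<Longrightarrow> f x y \<le> f x' y"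
  unfolding PS_algebra_def by (metis sup.absorb_iff2 sup.cobounded1)
lemma f_mono2: "PS_algebra f g \<Longrightarrow> y \<le> y' \<Longrightarrow> f x y \<le> f x y'"
  unfolding PS_algebra_def by (metis sup.absorb_iff2 sup.cobounded1)
lemma g_anti1: "PS_algebra f g \<Longrightarrow> x \<le> x' \<Longrightarrow> g x' y \<le> g x y"
  unfolding PS_algebra_def by (metis sup.absorb_iff2 inf.cobounded1)
lemma g_anti2: "PS_algebra f g \<Longrightarrow> y \<le> y' \<Longrightarrow> g x y' \<le> g x y"
  unfolding PS_algebra_def by (metis sup.absorb_iff2 inf.cobounded1)
lemma f_bot: "PS_algebra f g \<Longrightarrow> f bot y = bot"
  unfolding PS_algebra_def by blast

lemma Q_fI: "(\<And>x y. x \<in> U1 \<Longrightarrow> y \<in> U3 \<Longrightarrow> f x y \<in> U2) \<Longrightarrow> Q_f f U1 U2 U3"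
  unfolding Q_f_def by auto
lemma Q_fD: "Q_f f U1 U2 U3 \<Longrightarrow> x \<in> U1 \<Longrightarrow> y \<in> U3 \<Longrightarrow> f x y \<in> U2"
  unfolding Q_f_def by auto
lemma S_g_iff: "S_g g U1 U2 U3 \<longleftrightarrow> (\<exists>x\<in>U1. \<exists>y\<in>U3. g x y \<in> U2)"
  unfolding S_g_def by auto

lemma part_i:
  assumes B: "betweenness_algebra f g" and U: "ultrafilter U"
  shows "Q_f f U U U"
proof (rule Q_fI)
  fix x y assume x: "x \<in> U" and y: "y \<in> U"
  have P: "PS_algebra f g" and A0: "ABT0 f" using B unfolding betweenness_algebra_def by auto
  let ?z = "inf x y"
  have "?z \<in> U" using uf_inf[OF U x y] .
  moreover have "?z \<le> f ?z ?z" using A0 unfolding ABT0_def by blast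
  moreover have "f ?z ?z \<le> f x ?z" by (rule f_mono1[OF P]) simp
  moreover have "f x ?z \<le> f x y" by (rule f_mono2[OF P]) simp
  ultimately show "f x y \<in> U" using uf_up[OF U] by (meson order_trans)
qed

lemma part_iv:
  assumes B: "betweenness_algebra f g" and U1: "ultrafilter U1" and U2: "ultrafilter U2"
    and U3: "ultrafilter U3" and Q: "Q_f f U1 U2 U3"
  shows "Q_f f U1 U1 U2"
proof (rule Q_fI)
  fix x y assume x: "x \<in> U1" and y: "y \<in> U2"
  have P: "PS_algebra f g" and A2: "ABT2 f" using B unfolding betweenness_algebra_def by auto
  show "f x y \<in> U1"
  proof (rule ccontr)
    assume "f x y \<notin> U1"
    then have "- f x y \<in> U1" using uf_compl[OF U1] by blast
    define w where "w = inf x (- f x y)"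
    have w: "w \<in> U1" unfolding w_def using uf_inf[OF U1 x] \<open>- f x y \<in> U1\<close> by blast
    have "f w top \<in> U2" using Q_fD[OF Q w uf_top[OF U3]] .
    then have "inf y (f w top) \<in> U2" using uf_inf[OF U2 y] by blast
    moreover have "inf y (f w top) \<le> f (inf w (f w y)) top" using A2 unfolding ABT2_def by blast
    moreover have "f w y \<le> f x y" by (rule f_mono1[OF P]) (simp add: w_def)
    then have "inf w (f w y) = bot" unfolding w_def
      by (metis inf.assoc inf.orderE inf_compl_bot_right inf_bot_right inf_commute)
    ultimately have "bot \<in> U2" using uf_up[OF U2] f_bot[OF P] by metis
    then show False using uf_bot[OF U2] by blast
  qed
qed

lemma part_v:
  assumes B: "betweenness_algebra f g" and U1: "ultrafilter U1" and U2: "ultrafilter U2"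
    and U3: "ultrafilter U3" and Q: "Q_f f U1 U2 U3" and S: "S_g g U1 U3 U2"
  shows "U2 = U3"
proof -
  have P: "PS_algebra f g" and A3: "ABT3 f g" using B unfolding betweenness_algebra_def by auto
  obtain x y where x: "x \<in> U1" and y: "y \<in> U2" and gxy: "g x y \<in> U3"
    using S unfolding S_g_iff by blast
  have "U3 \<subseteq> U2"
  proof
    fix a assume a: "a \<in> U3"
    show "a \<in> U2"
    proof (rule ccontr)
      assume "a \<notin> U2"
      then have na: "- a \<in> U2" using uf_compl[OF U2] by blast
      define y' where "y' = inf y (- a)"
      have y': "y' \<in> U2" unfolding y'_def using uf_inf[OF U2 y na] .
      have "g x y \<le> g x y'" by (rule g_anti2[OF P]) (simp add: y'_def)
      then have "g x (- (- y')) \<in> U3" using uf_up[OF U3 gxy] by simp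
      moreover have "- y' \<in> U3" using uf_up[OF U3 a] unfolding y'_def by simp
      ultimately have "inf (g x (- (- y'))) (- y') \<in> U3" using uf_inf[OF U3] by blast
      then have "f x (inf (g x (- (- y'))) (- y')) \<in> U2" using Q_fD[OF Q x] by blast
      moreover have "f x (inf (g x (- (- y'))) (- y')) \<le> - y'" using A3 unfolding ABT3_def by blast
      ultimately have "- y' \<in> U2" using uf_up[OF U2] by blast
      then show False using uf_not_both[OF U2 y'] by blast
    qed
  qed
  then show ?thesis using uf_sub_eq[OF U3 U2] by blast
qed

lemma part_weak:
  assumes B: "weak_betweenness_algebra f g" and U1: "ultrafilter U1" and U2: "ultrafilter U2"
    and S: "S_g g U1 U2 U1"
  shows "U1 = U2"
proof -
  have P: "PS_algebra f g" and AW: "ABTW g" using B unfolding weak_betweenness_algebra_def by auto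
  obtain x z where x: "x \<in> U1" and z: "z \<in> U1" and gxz: "g x z \<in> U2"
    using S unfolding S_g_iff by blast
  have "U1 \<subseteq> U2"
  proof
    fix b assume b: "b \<in> U1"
    define a where "a = inf (inf x z) b"
    have a: "a \<in> U1" unfolding a_def using uf_inf[OF U1] x z b by blast
    have "g x z \<le> g a z" by (rule g_anti1[OF P]) (simp add: a_def le_infI1)
    also have "\<dots> \<le> g a a" by (rule g_anti2[OF P]) (simp add: a_def le_infI1)
    also have "\<dots> \<le> a" using AW uf_nonbot[OF U1 a] unfolding ABTW_def by blast
    also have "a \<le> b" unfolding a_def by simp
    finally show "b \<in> U2" using uf_up[OF U2 gxz] by blast
  qed
  then show ?thesis using uf_sub_eq[OF U1 U2] by blast
qed

lemma part_ii:
  assumes B: "betweenness_algebra f g" and U2: "ultrafilter U2" and Q: "Q_f f U1 U2 U3"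
  shows "Q_f f U3 U2 U1"
proof (rule Q_fI)
  have A1f: "ABT1 f" using B unfolding betweenness_algebra_def by auto
  fix x y assume "x \<in> U3" "y \<in> U1"
  then have "f y x \<in> U2" using Q_fD[OF Q] by blast
  moreover have "f y x \<le> f x y" using A1f unfolding ABT1_def by blast
  ultimately show "f x y \<in> U2" using uf_up U2 by blast
qed

lemma part_iii:
  assumes B: "betweenness_algebra f g" and U2: "ultrafilter U2" and S: "S_g g U1 U2 U3"
  shows "S_g g U3 U2 U1"
proof -
  have A1g: "ABT1 g" using B unfolding betweenness_algebra_def by auto
  obtain x y where "x \<in> U1" "y \<in> U3" "g x y \<in> U2" using S unfolding S_g_iff by blast
  moreover have "g x y \<le> g y x" using A1g unfolding ABT1_def by blast
  ultimately show ?thesis unfolding S_g_iff using uf_up U2 by blast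
qed

lemma part_strong:
  assumes B: "strong_betweenness_algebra f g" and U1: "ultrafilter U1" and U2: "ultrafilter U2"
  shows "Q_f f U1 U1 U2"
proof (rule Q_fI)
  have A: "ABT2s f" using B unfolding strong_betweenness_algebra_def by auto
  fix x y assume x: "x \<in> U1" and y: "y \<in> U2"
  have "x \<le> f x y" using A uf_nonbot[OF U2 y] unfolding ABT2s_def by blast
  then show "f x y \<in> U1" using uf_up[OF U1 x] by blast
qed

theorem lemma41:
  fixes f g :: "'a::boolean_algebra \<Rightarrow> 'a \<Rightarrow> 'a"
  shows
  "(betweenness_algebra f g \<longrightarrow>
     (\<forall>U. ultrafilter U \<longrightarrow> Q_f f U U U) \<and>
     (\<forall>U1 U2 U3. ultrafilter U1 \<and> ultrafilter U2 \<and> ultrafilter U3 \<longrightarrow>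
        (Q_f f U1 U2 U3 \<longrightarrow> Q_f f U3 U2 U1) \<and>
        (S_g g U1 U2 U3 \<longrightarrow> S_g g U3 U2 U1) \<and>
        (Q_f f U1 U2 U3 \<longrightarrow> Q_f f U1 U1 U2) \<and>
        (Q_f f U1 U2 U3 \<and> S_g g U1 U3 U2 \<longrightarrow> U2 = U3))) \<and>
   (strong_betweenness_algebra f g \<longrightarrow>
     (\<forall>U1 U2. ultrafilter U1 \<and> ultrafilter U2 \<longrightarrow> Q_f f U1 U1 U2)) \<and>
   (weak_betweenness_algebra f g \<longrightarrow>
     (\<forall>U1 U2. ultrafilter U1 \<and> ultrafilter U2 \<longrightarrow> S_g g U1 U2 U1 \<longrightarrow> U1 = U2))"
  apply (intro conjI impI allI)
          apply (erule (1) part_i)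
         apply (metis part_ii)
        apply (metis part_iii)
       apply (metis part_iv)
      apply (metis part_v)
     apply (metis part_strong)
    apply (metis part_weak)
  done

end
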